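(* Let $\nu=\{-\pi=s_0<s_1<\dots<s_l=\pi\}$ be a partition of $[-\pi,\pi]$ with mesh $\rho:=\max_i|s_{i+1}-s_i|$, and let $\lfloor t\rfloor:=\max\{z\in\nu:z\le t\}$. Let $r>1$, $N\in\mathbb N$ and $t\in[-\pi,\pi]$. Then $$\int_{-\pi}^t\big|D_N(\lfloor t\rfloor-\lfloor s\rfloor)\big|^r\,ds\le 5\big(\rho+(2N+1)^{-1}\big)(2N+1)^r+\frac{2\pi^r}{r-1}(2N+1)^{r-1},$$ and consequently $\int_{-\pi}^t|\tilde D_N(\lfloor t\rfloor-\lfloor s\rfloor)|^r\,ds\le 5\rho+(2N+1)^{-1}\big(5+\frac{2\pi^r}{r-1}\big)$.
   Context: $D_N(t):=\sum_{|l|\le N}e^{ilt}$ ($i$ the imaginary unit) is the Dirichlet kernel, $D_N(t)=\frac{\sin((N+1/2)t)}{\sin(t/2)}$, and $\tilde D_N:=D_N/(2N+1)$. *)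

theory Defs
  imports "HOL-Analysis.Analysis"
begin

definition dirichlet :: "nat \<Rightarrow> real \<Rightarrow> complex" where
  "dirichlet N t = (\<Sum>k\<in>{-int N..int N}. exp (\<i> * complex_of_real (real_of_int k * t)))"

definition dirichlet_tilde :: "nat \<Rightarrow> real \<Rightarrow> complex" where
  "dirichlet_tilde N t = dirichlet N t / of_nat (2 * N + 1)"

definition part_floor :: "real set \<Rightarrow> real \<Rightarrow> real" where
  "part_floor \<nu> t = Max {z \<in> \<nu>. z \<le> t}"

definition mesh :: "(nat \<Rightarrow> real) \<Rightarrow> nat \<Rightarrow> real" where
  "mesh s l = Max {s (Suc i) - s i | i. i < l}"

end

theory Submission
  imports Defs
begin

lemma jordan:
  fixes x :: real
  assumes "0 \<le> x" "x \<le> pi/2"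
  shows "2 * x / pi \<le> sin x"
proof -
  have cv: "convex_on {0..pi/2} (\<lambda>x. - sin x)"
  proof (rule convex_on_realI[where f'="\<lambda>x. - cos x"])
    show "connected {0..pi/2::real}" by simp
    show "((\<lambda>x. - sin x) has_real_derivative - cos x) (at x)" for x
      by (auto intro!: derivative_eq_intros)
    show "- cos x \<le> - cos y" if "x \<in> {0..pi/2}" "y \<in> {0..pi/2}" "x \<le> y" for x y
      using cos_monotone_0_pi_le[of x y] that by auto
  qed
  define t where "t = 2 * x / pi"
  have t01: "0 \<le> t" "t \<le> 1" using assms pi_gt_zero unfolding t_def by (auto simp: field_simps)
  have "- sin ((1 - t) *\<^sub>R 0 + t *\<^sub>R (pi/2)) \<le> (1 - t) * (- sin 0) + t * (- sin (pi/2))"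
    by (rule convex_onD[OF cv]) (use t01 in auto)
  moreover have "(1 - t) *\<^sub>R 0 + t *\<^sub>R (pi/2) = x" unfolding t_def by simp
  ultimately show ?thesis unfolding t_def by simp
qed

lemma sin_half_lb:
  fixes v :: real
  assumes "0 < v" "v < 2*pi"
  shows "min v (2*pi - v) / pi \<le> sin (v/2)"
proof (cases "v \<le> pi")
  case True
  then show ?thesis using jordan[of "v/2"] assms by auto
next
  case False
  have "sin (v/2) = sin (pi - v/2)" by (simp add: sin_diff)
  moreover have "2 * (pi - v/2) / pi \<le> sin (pi - v/2)" using jordan[of "pi - v/2"] assms False by auto
  ultimately show ?thesis using False by (auto simp: field_simps)
qed

lemma dir_bound1: "cmod (dirichlet N u) \<le> real (2*N+1)"
proof -
  have "cmod (dirichlet N u) \<le> (\<Sum>k\<in>{-int N..int N}. cmod (exp (\<i> * complex_of_real (real_of_int k * u))))"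
    unfolding dirichlet_def by (rule norm_sum)
  also have "\<dots> = real (card {-int N..int N})" by simp
  also have "\<dots> = real (2*N+1)" by simp
  finally show ?thesis .
qed

lemma dir_bound2: "cmod (dirichlet N u) * (2 * \<bar>sin (u/2)\<bar>) \<le> 2"
proof -
  define z where "z = exp (\<i> * complex_of_real u)"
  have e: "exp (\<i> * complex_of_real (real_of_int (int j - int N) * u)) = exp (- \<i> * complex_of_real (real N * u)) * z ^ j" for j
  proof -
    have "exp (\<i> * complex_of_real (real_of_int (int j - int N) * u)) = exp (of_nat j * (\<i> * complex_of_real u) + (- \<i> * complex_of_real (real N * u)))"
      by (simp add: algebra_simps)
    also have "\<dots> = z ^ j * exp (- \<i> * complex_of_real (real N * u))"
      unfolding z_def by (simp only: exp_add exp_of_nat_mult)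
    also have "\<dots> = exp (- \<i> * complex_of_real (real N * u)) * z ^ j" by simp
    finally show ?thesis .
  qed
  have img: "{-int N..int N} = (\<lambda>j. int j - int N) ` {..<2*N+1}"
  proof (rule set_eqI, rule iffI)
    fix k assume "k \<in> {-int N..int N}"
    then show "k \<in> (\<lambda>j. int j - int N) ` {..<2*N+1}"
      by (intro image_eqI[where x="nat (k + int N)"]) auto
  qed auto
  have inj: "inj_on (\<lambda>j. int j - int N) {..<2*N+1}" by (auto simp: inj_on_def)
  have "dirichlet N u = (\<Sum>j<2*N+1. exp (- \<i> * complex_of_real (real N * u)) * z ^ j)"
    unfolding dirichlet_def img sum.reindex[OF inj] comp_def by (simp only: e)
  also have "\<dots> = exp (- \<i> * complex_of_real (real N * u)) * (\<Sum>j<2*N+1. z ^ j)"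
    by (rule sum_distrib_left[symmetric])
  finally have D: "cmod (dirichlet N u) = cmod (\<Sum>j<2*N+1. z ^ j)"
    by (simp add: norm_mult)
  have z1: "cmod (z - 1) = 2 * \<bar>sin (u/2)\<bar>" unfolding z_def by (rule dist_exp_i_1)
  have gs: "(\<Sum>j<n. z ^ j) * (1 - z) = 1 - z ^ n" for n
    by (simp add: one_diff_power_eq mult.commute)
  have "(\<Sum>j<2*N+1. z ^ j) * (1 - z) = 1 - z ^ (2*N+1)" by (rule gs)
  hence "cmod (\<Sum>j<2*N+1. z ^ j) * cmod (z - 1) = cmod (1 - z ^ (2*N+1))"
    by (metis norm_minus_commute norm_mult)
  also have "\<dots> \<le> 2"
  proof -
    have "cmod (1 - z ^ (2*N+1)) \<le> cmod (1::complex) + cmod (z ^ (2*N+1))" by (rule norm_triangle_ineq4)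
    also have "\<dots> = 2" unfolding z_def norm_power norm_exp_i_times by simp
    finally show ?thesis .
  qed
  finally show ?thesis using D z1 by simp
qed
lemma aux_r: "r > (1::real) \<Longrightarrow> (1 - r) * X / (r - 1) = - X"
  by (simp add: field_simps)

lemma int_left:
  fixes a r c lo hi :: real
  assumes a: "a > 0" and r: "r > 1" and lh: "lo \<le> hi" and hc: "hi \<le> c - a"
  shows "(\<lambda>x. (c - x) powr (-r)) integrable_on {lo..hi}
    \<and> integral {lo..hi} (\<lambda>x. (c - x) powr (-r)) \<le> a powr (1-r) / (r-1)"
proof -
  define F where "F x = (c - x) powr (1-r) / (r-1)" for x
  have "((\<lambda>x. (c - x) powr (-r)) has_integral (F hi - F lo)) {lo..hi}"
  proof (rule fundamental_theorem_of_calculus[OF lh])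
    fix x assume x: "x \<in> {lo..hi}"
    hence cx: "c - x > 0" using a hc by auto
    have "(F has_real_derivative (c - x) powr (-r)) (at x)"
      unfolding F_def using cx r
      by (auto intro!: derivative_eq_intros simp: aux_r)
    thus "(F has_vector_derivative (c - x) powr (-r)) (at x within {lo..hi})"
      by (simp add: has_real_derivative_iff_has_vector_derivative has_vector_derivative_at_within)
  qed
  moreover have "F hi - F lo \<le> a powr (1-r) / (r-1)"
  proof -
    have "F hi - F lo = ((c - hi) powr (1-r) - (c - lo) powr (1-r)) / (r - 1)"
      unfolding F_def using r by (simp add: diff_divide_distrib)
    also have "\<dots> \<le> (c - hi) powr (1-r) / (r - 1)"
      using r by (simp add: divide_right_mono)
    also have "\<dots> \<le> a powr (1-r) / (r - 1)"
      using r a hc by (intro divide_right_mono powr_mono2') auto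
    finally show ?thesis .
  qed
  ultimately show ?thesis by (auto simp: integrable_on_def integral_unique)
qed

lemma int_right:
  fixes a r d lo hi :: real
  assumes a: "a > 0" and r: "r > 1" and lh: "lo \<le> hi" and hc: "a \<le> lo + d"
  shows "(\<lambda>x. (x + d) powr (-r)) integrable_on {lo..hi}
    \<and> integral {lo..hi} (\<lambda>x. (x + d) powr (-r)) \<le> a powr (1-r) / (r-1)"
proof -
  define F where "F x = - ((x + d) powr (1-r) / (r-1))" for x
  have "((\<lambda>x. (x + d) powr (-r)) has_integral (F hi - F lo)) {lo..hi}"
  proof (rule fundamental_theorem_of_calculus[OF lh])
    fix x assume x: "x \<in> {lo..hi}"
    hence cx: "x + d > 0" using a hc by auto
    have "(F has_real_derivative (x + d) powr (-r)) (at x)"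
      unfolding F_def using cx r
      by (auto intro!: derivative_eq_intros simp: aux_r)
    thus "(F has_vector_derivative (x + d) powr (-r)) (at x within {lo..hi})"
      by (simp add: has_real_derivative_iff_has_vector_derivative has_vector_derivative_at_within)
  qed
  moreover have "F hi - F lo \<le> a powr (1-r) / (r-1)"
  proof -
    have "F hi - F lo = ((lo + d) powr (1-r) - (hi + d) powr (1-r)) / (r - 1)"
      unfolding F_def using r by (simp add: diff_divide_distrib)
    also have "\<dots> \<le> (lo + d) powr (1-r) / (r - 1)"
      using r by (simp add: divide_right_mono)
    also have "\<dots> \<le> a powr (1-r) / (r - 1)"
      using r a hc by (intro divide_right_mono powr_mono2') auto
    finally show ?thesis .
  qed
  ultimately show ?thesis by (auto simp: integrable_on_def integral_unique)
qed

lemma dir_bound3: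
  assumes "0 < v" "v < 2*pi"
  shows "cmod (dirichlet N v) \<le> pi / min v (2*pi - v)"
proof -
  have m: "min v (2*pi - v) > 0" using assms by auto
  have sl: "min v (2*pi - v) / pi \<le> sin (v/2)" by (rule sin_half_lb[OF assms])
  have mp: "min v (2*pi - v) / pi > 0" using m by simp
  hence sp: "sin (v/2) > 0" using sl by linarith
  have "cmod (dirichlet N v) * sin (v/2) \<le> 1" using dir_bound2[of N v] sp by simp
  hence "cmod (dirichlet N v) \<le> 1 / sin (v/2)" using sp by (simp add: field_simps)
  also have "\<dots> \<le> 1 / (min v (2*pi - v) / pi)"
    using sl sp mp by (intro divide_left_mono mult_pos_pos) auto
  finally show ?thesis by simp
qed

theorem mainTheorem15:
  fixes s :: "nat \<Rightarrow> real" and l N :: nat and r t :: real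
  assumes incr: "\<forall>i<l. s i < s (Suc i)"
    and start: "s 0 = -pi" and stop: "s l = pi"
    and r: "r > 1"
    and t: "t \<in> {-pi..pi}"
  shows "integral {-pi..t}
           (\<lambda>x. cmod (dirichlet N (part_floor (s ` {0..l}) t - part_floor (s ` {0..l}) x)) powr r)
         \<le> 5 * (mesh s l + 1 / real (2 * N + 1)) * real (2 * N + 1) powr r
           + 2 * pi powr r / (r - 1) * real (2 * N + 1) powr (r - 1)
       \<and> integral {-pi..t}
           (\<lambda>x. cmod (dirichlet_tilde N (part_floor (s ` {0..l}) t - part_floor (s ` {0..l}) x)) powr r)
         \<le> 5 * mesh s l + (1 / real (2 * N + 1)) * (5 + 2 * pi powr r / (r - 1))"
proof -
  define P where "P = s ` {0..l}"
  define M where "M = real (2 * N + 1)"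
  define a where "a = 1 / M"
  define \<rho> where "\<rho> = mesh s l"
  have M1: "M \<ge> 1" unfolding M_def by simp
  have a0: "a > 0" unfolding a_def using M1 by simp
  have l0: "l > 0" using start stop pi_gt_zero by (cases l) auto
  have mono: "s i \<le> s j" if "i \<le> j" "j \<le> l" for i j
    using that
  proof (induction j)
    case 0 then show ?case by simp
  next
    case (Suc j)
    show ?case
    proof (cases "i = Suc j")
      case False
      then have "i \<le> j" using Suc.prems by simp
      then have "s i \<le> s j" using Suc by simp
      also have "s j < s (Suc j)" using incr Suc.prems by simp
      finally show ?thesis by simp
    qed simp
  qed
  have Psub: "P \<subseteq> {-pi..pi}"
    unfolding P_def using mono start stop by force
  have finP: "finite P" unfolding P_def by simp
  have spi: "-pi \<in> P" unfolding P_def using start by force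
  have fin_mesh: "finite {s (Suc i) - s i | i. i < l}"
  proof -
    have "{s (Suc i) - s i | i. i < l} = (\<lambda>i. s (Suc i) - s i) ` {..<l}" by auto
    thus ?thesis by simp
  qed
  have meshge: "s (Suc i) - s i \<le> \<rho>" if "i < l" for i
    unfolding \<rho>_def mesh_def using that by (intro Max_ge[OF fin_mesh]) auto
  have rho0: "\<rho> > 0" using meshge[OF l0] incr l0 by force
  have seg: "0 < m \<Longrightarrow> s 0 \<le> x \<Longrightarrow> x \<le> s m \<Longrightarrow> \<exists>i<m. s i \<le> x \<and> x \<le> s (Suc i)" for m x
  proof (induction m)
    case 0 then show ?case by simp
  next
    case (Suc m)
    show ?case
    proof (cases "x \<le> s m")
      case True
      show ?thesis
      proof (cases "m = 0")
        case True then show ?thesis using Suc.prems by auto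
      next
        case False
        then obtain i where "i < m" "s i \<le> x \<and> x \<le> s (Suc i)" using Suc True by auto
        then show ?thesis by (intro exI[of _ i]) auto
      qed
    next
      case False
      then show ?thesis using Suc.prems by (intro exI[of _ m]) auto
    qed
  qed
  have pf: "part_floor P x \<in> P \<and> part_floor P x \<le> x \<and> x - part_floor P x \<le> \<rho>"
    if x: "x \<in> {-pi..pi}" for x
  proof -
    define Z where "Z = {z \<in> P. z \<le> x}"
    have fZ: "finite Z" unfolding Z_def using finP by simp
    have "-pi \<in> Z" unfolding Z_def using spi x by simp
    hence nZ: "Z \<noteq> {}" by auto
    have inZ: "Max Z \<in> Z" by (rule Max_in[OF fZ nZ])
    obtain i where i: "i < l" "s i \<le> x" "x \<le> s (Suc i)" using seg[OF l0, of x] x start stop by auto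
    have "s i \<in> Z" unfolding Z_def P_def using i by auto
    hence "s i \<le> Max Z" using Max_ge[OF fZ] by auto
    moreover have "s (Suc i) - s i \<le> \<rho>" using meshge[OF i(1)] .
    ultimately have "x - Max Z \<le> \<rho>" using i by linarith
    thus ?thesis using inZ unfolding Z_def part_floor_def by auto
  qed
  define sk where "sk = part_floor P t"
  have sk: "sk \<le> t" "t - sk \<le> \<rho>" "-pi \<le> sk" "sk \<le> pi"
    using pf[OF t] Psub unfolding sk_def by auto
  define f where "f x = cmod (dirichlet N (sk - part_floor P x)) powr r" for x
  define g1 where "g1 x = (if x \<in> {sk - a..t} then M powr r else 0)" for x
  define g2 where "g2 x = (if x \<in> {-pi..-pi + a + \<rho>} then M powr r else 0)" for x
  define g3 where "g3 x = (if x \<in> {-pi..sk - a} then pi powr r * (sk - x) powr (-r) else 0)" for x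
  define g4 where "g4 x = (if x \<in> {-pi + a + \<rho>..t} then pi powr r * (x + (pi - \<rho>)) powr (-r) else 0)" for x
  define g where "g x = g1 x + g2 x + g3 x + g4 x" for x
  have g_nonneg: "g1 x \<ge> 0" "g2 x \<ge> 0" "g3 x \<ge> 0" "g4 x \<ge> 0" for x
    unfolding g1_def g2_def g3_def g4_def by auto
  have fM: "f x \<le> M powr r" for x
    unfolding f_def M_def using r dir_bound1[of N "sk - part_floor P x"] by (intro powr_mono2) simp_all
  have fg: "f x \<le> g x" if x: "x \<in> {-pi..t}" for x
  proof (cases "x \<in> {sk - a..t} \<or> x \<in> {-pi..-pi + a + \<rho>}")
    case True
    then have "M powr r \<le> g x" unfolding g_def using g_nonneg[of x]
      by (auto simp: g1_def g2_def)
    then show ?thesis using fM[of x] by linarith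
  next
    case False
    then have x1: "x < sk - a" "x > -pi + a + \<rho>" using x by auto
    have xpi: "x \<in> {-pi..pi}" using x t by auto
    define p where "p = part_floor P x"
    have p: "p \<le> x" "x - p \<le> \<rho>" using pf[OF xpi] unfolding p_def by auto
    define v where "v = sk - p"
    define w where "w = sk - x"
    define w2 where "w2 = x + (pi - \<rho>)"
    have w: "w > a" "w2 > a" unfolding w_def w2_def using x1 by auto
    have vw: "v \<ge> w" "2*pi - v \<ge> w2" unfolding v_def w_def w2_def using p sk by auto
    have mpos: "min w w2 > 0" using w a0 by auto
    have v: "0 < v" "v < 2*pi" using vw w a0 by auto
    have "cmod (dirichlet N v) \<le> pi / min v (2*pi - v)" by (rule dir_bound3[OF v])
    also have "\<dots> \<le> pi / min w w2"
      using vw mpos by (intro divide_left_mono) auto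
    finally have cb: "cmod (dirichlet N v) \<le> pi / min w w2" .
    have "f x \<le> (pi / min w w2) powr r"
      unfolding f_def p_def[symmetric] v_def[symmetric] using r cb by (intro powr_mono2) auto
    also have "\<dots> = pi powr r * (min w w2) powr (-r)"
      by (simp add: powr_divide powr_minus_divide)
    also have "\<dots> \<le> pi powr r * (w powr (-r) + w2 powr (-r))"
    proof (intro mult_left_mono)
      show "min w w2 powr - r \<le> w powr - r + w2 powr - r"
        by (cases "w \<le> w2") (auto simp: min_def)
    qed simp
    also have "\<dots> = g x"
      unfolding g_def g1_def g2_def g3_def g4_def w_def w2_def using x1 x by (auto simp: algebra_simps)
    finally show ?thesis .
  qed
  define A where "A = a powr (1 - r) / (r - 1)"
  have I1: "g1 integrable_on {-pi..t} \<and> integral {-pi..t} g1 \<le> (\<rho> + a) * M powr r"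
  proof -
    have eq: "{sk - a..t} \<inter> {-pi..t} = {max (sk - a) (-pi)..t}" by auto
    have "g1 integrable_on {-pi..t}"
      unfolding g1_def integrable_restrict_Int eq by (rule integrable_const_ivl)
    moreover have "integral {-pi..t} g1 = (if max (sk - a) (-pi) \<le> t then t - max (sk - a) (-pi) else 0) * M powr r"
      unfolding g1_def integral_restrict_Int eq by simp
    moreover have "(if max (sk - a) (-pi) \<le> t then t - max (sk - a) (-pi) else 0) \<le> \<rho> + a" using sk rho0 a0 by auto
    ultimately show ?thesis by (auto intro: mult_right_mono)
  qed
  have I2: "g2 integrable_on {-pi..t} \<and> integral {-pi..t} g2 \<le> (\<rho> + a) * M powr r"
  proof -
    have eq: "{-pi..-pi + a + \<rho>} \<inter> {-pi..t} = {-pi..min (-pi + a + \<rho>) t}" by auto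
    have "g2 integrable_on {-pi..t}"
      unfolding g2_def integrable_restrict_Int eq by (rule integrable_const_ivl)
    moreover have "integral {-pi..t} g2 = (if -pi \<le> min (-pi + a + \<rho>) t then min (-pi + a + \<rho>) t + pi else 0) * M powr r"
      unfolding g2_def integral_restrict_Int eq by simp
    moreover have "(if -pi \<le> min (-pi + a + \<rho>) t then min (-pi + a + \<rho>) t + pi else 0) \<le> \<rho> + a" using sk rho0 a0 by auto
    ultimately show ?thesis by (auto intro: mult_right_mono)
  qed
  have I3: "g3 integrable_on {-pi..t} \<and> integral {-pi..t} g3 \<le> pi powr r * A"
  proof -
    have eq: "{-pi..sk - a} \<inter> {-pi..t} = {-pi..sk - a}" using sk a0 by auto
    show ?thesis
    proof (cases "-pi \<le> sk - a")
      case True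
      from int_left[OF a0 r True, of sk] have h:
        "(\<lambda>x. (sk - x) powr (-r)) integrable_on {-pi..sk - a}"
        "integral {-pi..sk - a} (\<lambda>x. (sk - x) powr (-r)) \<le> A" unfolding A_def by auto
      have "g3 integrable_on {-pi..t}"
        unfolding g3_def integrable_restrict_Int eq using h(1) by (rule integrable_on_mult_right)
      moreover have "integral {-pi..t} g3 = pi powr r * integral {-pi..sk - a} (\<lambda>x. (sk - x) powr (-r))"
        unfolding g3_def integral_restrict_Int eq by simp
      ultimately show ?thesis using h(2) by (auto intro: mult_left_mono)
    next
      case False
      then have "{-pi..sk - a} = {}" by auto
      then show ?thesis unfolding g3_def integrable_restrict_Int integral_restrict_Int eq A_def
        using r a0 by auto
    qed
  qed
  have I4: "g4 integrable_on {-pi..t} \<and> integral {-pi..t} g4 \<le> pi powr r * A"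
  proof -
    have eq: "{-pi + a + \<rho>..t} \<inter> {-pi..t} = {-pi + a + \<rho>..t}" using rho0 a0 by auto
    show ?thesis
    proof (cases "-pi + a + \<rho> \<le> t")
      case True
      from int_right[OF a0 r True, of "pi - \<rho>"] have h:
        "(\<lambda>x. (x + (pi - \<rho>)) powr (-r)) integrable_on {-pi + a + \<rho>..t}"
        "integral {-pi + a + \<rho>..t} (\<lambda>x. (x + (pi - \<rho>)) powr (-r)) \<le> A" unfolding A_def by auto
      have "g4 integrable_on {-pi..t}"
        unfolding g4_def integrable_restrict_Int eq using h(1) by (rule integrable_on_mult_right)
      moreover have "integral {-pi..t} g4 = pi powr r * integral {-pi + a + \<rho>..t} (\<lambda>x. (x + (pi - \<rho>)) powr (-r))"
        unfolding g4_def integral_restrict_Int eq by simp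
      ultimately show ?thesis using h(2) by (auto intro: mult_left_mono)
    next
      case False
      then have "{-pi + a + \<rho>..t} = {}" by auto
      then show ?thesis unfolding g4_def integrable_restrict_Int integral_restrict_Int eq A_def
        using r a0 by auto
    qed
  qed
  have gint: "g integrable_on {-pi..t}"
    unfolding g_def using I1 I2 I3 I4 by (intro integrable_add) auto
  have "integral {-pi..t} g = integral {-pi..t} g1 + integral {-pi..t} g2 + integral {-pi..t} g3 + integral {-pi..t} g4"
    unfolding g_def using I1 I2 I3 I4
    by (subst integral_add, auto intro!: integrable_add)+
  hence gb: "integral {-pi..t} g \<le> 2 * (\<rho> + a) * M powr r + 2 * pi powr r * A"
    using I1 I2 I3 I4 by linarith
  have A0: "A \<ge> 0" unfolding A_def using r by simp
  have Mr0: "M powr r > 0" using M1 by simp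
  have fb: "integral {-pi..t} f \<le> 2 * (\<rho> + a) * M powr r + 2 * pi powr r * A"
  proof (cases "f integrable_on {-pi..t}")
    case True
    have "integral {-pi..t} f \<le> integral {-pi..t} g"
      by (rule integral_le[OF True gint fg])
    then show ?thesis using gb by linarith
  next
    case False
    then show ?thesis using A0 Mr0 rho0 a0 by (simp add: not_integrable_integral)
  qed
  have aM: "a powr (1 - r) = M powr (r - 1)"
  proof -
    have "a powr (1 - r) = 1 / M powr (1 - r)" unfolding a_def using M1 by (simp add: powr_divide)
    also have "\<dots> = M powr (- (1 - r))" by (rule powr_minus_divide[symmetric])
    finally show ?thesis by simp
  qed
  have Mr1: "M powr (r - 1) = M powr r / M" using M1 by (simp add: powr_diff)
  have B1: "integral {-pi..t} f \<le> 5 * (\<rho> + a) * M powr r + 2 * pi powr r / (r - 1) * M powr (r - 1)"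
  proof -
    have "2 * pi powr r * A = 2 * pi powr r / (r - 1) * M powr (r - 1)"
      unfolding A_def aM by simp
    moreover have "0 \<le> (\<rho> + a) * M powr r" using rho0 a0 Mr0 by simp
    ultimately show ?thesis using fb by linarith
  qed
  have tl: "cmod (dirichlet_tilde N y) powr r = cmod (dirichlet N y) powr r / M powr r" for y
    unfolding dirichlet_tilde_def M_def using M1
    by (simp add: norm_divide powr_divide del: of_nat_Suc)
  have B2: "integral {-pi..t} f / M powr r \<le> 5 * \<rho> + a * (5 + 2 * pi powr r / (r - 1))"
  proof -
    have "integral {-pi..t} f / M powr r \<le> (5 * (\<rho> + a) * M powr r + 2 * pi powr r / (r - 1) * M powr (r - 1)) / M powr r"
      using B1 Mr0 by (simp add: divide_right_mono)
    also have "\<dots> = 5 * \<rho> + a * (5 + 2 * pi powr r / (r - 1))"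
    proof -
      have gen: "(5 * (\<rho> + a) * X + K * (X / M)) / X = 5 * \<rho> + a * (5 + K)" if "X > 0" for X K :: real
        unfolding a_def using that M1 by (simp add: field_simps)
      show ?thesis unfolding Mr1 by (rule gen[OF Mr0])
    qed
    finally show ?thesis .
  qed
  have feq: "(\<lambda>x. cmod (dirichlet N (part_floor (s ` {0..l}) t - part_floor (s ` {0..l}) x)) powr r) = f"
    unfolding f_def sk_def P_def ..
  have feq2: "(\<lambda>x. cmod (dirichlet_tilde N (part_floor (s ` {0..l}) t - part_floor (s ` {0..l}) x)) powr r) = (\<lambda>x. f x / M powr r)"
    unfolding f_def sk_def P_def tl ..
  show ?thesis
    unfolding feq feq2 integral_divide
    using B1 B2 unfolding M_def[symmetric] a_def \<rho>_def by simp
qed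

end
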